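(* Assume the setting and Assumption $( * )$ described in the context, and let $(y,w)$ be a solution of the integrated Maxey–Riley system on $[t_0,\infty)$. Then for every $\epsilon>0$, $w$ is $1/2$-Hölder continuous on $[t_0,t_0+\epsilon)$ and locally Lipschitz continuous on $[t_0+\epsilon,\infty)$.
   Context: Fix $n\ge 1$, a domain $\mathscr{D}\subseteq\mathbb{R}^n$, an initial time $t_0\ge 0$, a velocity field $u:\mathscr{D}\times[0,\infty)\to\mathbb{R}^n$, real constants $R,\mu,\kappa,\gamma>0$ and a constant vector $g\in\mathbb{R}^n$. Write $\frac{D}{Dt}=\partial_t+(u\cdot\nabla)$ and define $A_u,B_u:\mathscr{D}\times[t_0,\infty)\to\mathbb{R}^n$, $M_u:\mathscr{D}\times[t_0,\infty)\to\mathbb{R}^{n\times n}$ by $A_u=u+\frac{\gamma}{6}\mu^{-1}\Delta u$, $M_u=\nabla u+\frac{\gamma}{6}\mu^{-1}\nabla\Delta u$, $B_u=\left(\frac{3R}{2}-1\right)\left(\frac{Du}{Dt}-g\right)+\left(\frac{R}{20}-\frac16\right)\gamma\mu^{-1}\frac{D}{Dt}\Delta u-\frac{\gamma}{6}\mu^{-1}\left(\nabla u+\frac{\gamma}{6}\mu^{-1}\nabla\Delta u\right)\Delta u$. The integrated Maxey–Riley system is $y(t)=y_0+\int_{t_0}^t\big(w(s)+A_u(y(s),s)\big)\,ds$, $w(t)=w_0+\int_{t_0}^t\Big(-\mu w(s)-M_u(y(s),s)w(s)-\kappa\mu^{1/2}\frac{w(s)}{\sqrt{t-s}}+B_u(y(s),s)\Big)\,ds$.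 A solution on $[t_0,\infty)$ with initial condition $(y_0,w_0)$ is a pair of continuous maps $y:[t_0,\infty)\to\mathscr{D}$, $w:[t_0,\infty)\to\mathbb{R}^n$ satisfying both equations for every $t\ge t_0$. Assumption $( * )$: $u$ is smooth enough that the first-order partial derivatives in time and space of $A_u$ and $B_u$ exist, are continuous, and are uniformly bounded in time and space, i.e. there is $L_b$ with $\|\partial_tA_u\|_\infty,\|\nabla A_u\|_\infty,\|\partial_tB_u\|_\infty,\|\nabla B_u\|_\infty<L_b$. *)

theory Defs
  imports "HOL-Analysis.Analysis"
begin

definition pdx :: "'n::finite \<Rightarrow> (real^'n \<Rightarrow> real \<Rightarrow> 'b::real_normed_vector) \<Rightarrow> real^'n \<Rightarrow> real \<Rightarrow> 'b" where
  "pdx i f x t = vector_derivative (\<lambda>h. f (x + h *\<^sub>R axis i 1) t) (at 0)"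

definition pdt :: "real set \<Rightarrow> (real^'n \<Rightarrow> real \<Rightarrow> 'b::real_normed_vector) \<Rightarrow> real^'n \<Rightarrow> real \<Rightarrow> 'b" where
  "pdt T f x t = vector_derivative (\<lambda>s. f x s) (at t within T)"

definition lap :: "(real^'n::finite \<Rightarrow> real \<Rightarrow> 'b::real_normed_vector) \<Rightarrow> real^'n \<Rightarrow> real \<Rightarrow> 'b" where
  "lap f x t = (\<Sum>i\<in>UNIV. pdx i (pdx i f) x t)"

text \<open>Spatial Jacobian (nabla f)_{ij} = d f_i / d x_j, so (nabla f) v = (v . nabla) f.\<close>
definition jac :: "(real^'n::finite \<Rightarrow> real \<Rightarrow> real^'m::finite) \<Rightarrow> real^'n \<Rightarrow> real \<Rightarrow> real^'n^'m" where
  "jac f x t = (\<chi> i j. (pdx j f x t) $ i)"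

definition matdt :: "(real^'n::finite \<Rightarrow> real \<Rightarrow> real^'n) \<Rightarrow> (real^'n \<Rightarrow> real \<Rightarrow> 'b::real_normed_vector) \<Rightarrow> real^'n \<Rightarrow> real \<Rightarrow> 'b" where
  "matdt u f x t = pdt {0..} f x t + (\<Sum>j\<in>UNIV. (u x t $ j) *\<^sub>R pdx j f x t)"

definition A_u :: "real \<Rightarrow> real \<Rightarrow> (real^'n::finite \<Rightarrow> real \<Rightarrow> real^'n) \<Rightarrow> real^'n \<Rightarrow> real \<Rightarrow> real^'n" where
  "A_u mu gam u x t = u x t + (gam / 6 / mu) *\<^sub>R lap u x t"

definition M_u :: "real \<Rightarrow> real \<Rightarrow> (real^'n::finite \<Rightarrow> real \<Rightarrow> real^'n) \<Rightarrow> real^'n \<Rightarrow> real \<Rightarrow> real^'n^'n" where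
  "M_u mu gam u x t = jac u x t + (gam / 6 / mu) *\<^sub>R jac (lap u) x t"

definition B_u :: "real \<Rightarrow> real \<Rightarrow> real \<Rightarrow> real^'n \<Rightarrow> (real^'n::finite \<Rightarrow> real \<Rightarrow> real^'n) \<Rightarrow> real^'n \<Rightarrow> real \<Rightarrow> real^'n" where
  "B_u Rr mu gam g u x t =
     (3 * Rr / 2 - 1) *\<^sub>R (matdt u u x t - g)
   + ((Rr / 20 - 1 / 6) * gam / mu) *\<^sub>R matdt u (lap u) x t
   - (gam / 6 / mu) *\<^sub>R (M_u mu gam u x t *v lap u x t)"

definition C1_bounded :: "(real^'n::finite) set \<Rightarrow> real \<Rightarrow> (real^'n \<Rightarrow> real \<Rightarrow> 'b::real_normed_vector) \<Rightarrow> real \<Rightarrow> bool" where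
  "C1_bounded D t0 F L \<longleftrightarrow>
     (\<forall>x\<in>D. \<forall>t\<ge>t0.
        ((\<lambda>s. F x s) has_vector_derivative pdt {t0..} F x t) (at t within {t0..}) \<and>
        norm (pdt {t0..} F x t) < L \<and>
        (\<forall>i. ((\<lambda>h. F (x + h *\<^sub>R axis i 1) t) has_vector_derivative pdx i F x t) (at 0) \<and>
             norm (pdx i F x t) < L)) \<and>
     continuous_on (D \<times> {t0..}) (\<lambda>(x,t). pdt {t0..} F x t) \<and>
     (\<forall>i. continuous_on (D \<times> {t0..}) (\<lambda>(x,t). pdx i F x t))"

definition holder_on :: "real \<Rightarrow> real set \<Rightarrow> (real \<Rightarrow> 'b::real_normed_vector) \<Rightarrow> bool" where
  "holder_on a S f \<longleftrightarrow> (\<exists>C. \<forall>s\<in>S. \<forall>t\<in>S. norm (f t - f s) \<le> C * \<bar>t - s\<bar> powr a)"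

definition locally_lipschitz_on :: "real set \<Rightarrow> (real \<Rightarrow> 'b::real_normed_vector) \<Rightarrow> bool" where
  "locally_lipschitz_on S f \<longleftrightarrow>
     (\<forall>x\<in>S. \<exists>U C. open U \<and> x \<in> U \<and> C-lipschitz_on (U \<inter> S) f)"

end

theory Submission
  imports Defs
begin


lemma mvt_vec:
  fixes f :: "real \<Rightarrow> 'b::real_normed_vector"
  assumes "convex S" "\<And>x. x \<in> S \<Longrightarrow> (f has_vector_derivative f' x) (at x within S)"
    "\<And>x. x \<in> S \<Longrightarrow> norm (f' x) \<le> B" "x \<in> S" "y \<in> S"
  shows "norm (f x - f y) \<le> B * \<bar>x - y\<bar>"
proof -
  have "norm (f x - f y) \<le> B * norm (x - y)"
  proof (rule differentiable_bound[OF assms(1) _ _ assms(4,5)])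
    show "(f has_derivative (\<lambda>h. h *\<^sub>R f' z)) (at z within S)" if "z \<in> S" for z
      using assms(2)[OF that] by (simp add: has_vector_derivative_def)
    show "onorm (\<lambda>h. h *\<^sub>R f' z) \<le> B" if "z \<in> S" for z
      using assms(3)[OF that] onorm_scaleR_left[of "\<lambda>x. x" "f' z"] onorm_id[where 'a=real]
      by (simp add: bounded_linear_ident)
  qed
  then show ?thesis by simp
qed

lemma sing_kernel_int:
  assumes "a \<le> c" "c \<le> b"
  shows "((\<lambda>s. 1 / sqrt (b - s)) has_integral (2 * sqrt (b - a) - 2 * sqrt (b - c))) {a..c}"
proof -
  have "((\<lambda>s. 1 / sqrt (b - s)) has_integral ((- 2 * sqrt (b - c)) - (- 2 * sqrt (b - a)))) {a..c}"
  proof (rule fundamental_theorem_of_calculus_interior[OF assms(1)])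
    show "continuous_on {a..c} (\<lambda>s. - 2 * sqrt (b - s))"
      by (intro continuous_intros)
    fix x assume x: "x \<in> {a<..<c}"
    then have "b - x > 0" using assms by auto
    show "((\<lambda>s. - 2 * sqrt (b - s)) has_vector_derivative 1 / sqrt (b - x)) (at x)"
      unfolding has_real_derivative_iff_has_vector_derivative[symmetric]
      using \<open>b - x > 0\<close>
      by (auto intro!: derivative_eq_intros simp: field_simps)
  qed
  then show ?thesis by (simp add: algebra_simps)
qed

lemma sing_abs_int:
  fixes f :: "real \<Rightarrow> real"
  assumes "continuous_on {a..t} f"
  shows "(\<lambda>s. f s / sqrt (t - s)) absolutely_integrable_on {a..t}"
proof (cases "a \<le> t")
  case True
  have k: "(\<lambda>s. 1 / sqrt (t - s)) absolutely_integrable_on {a..t}"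
    by (rule nonnegative_absolutely_integrable_1)
       (use sing_kernel_int[OF True order_refl] in auto)
  have "(\<lambda>s. f s * (1 / sqrt (t - s))) absolutely_integrable_on {a..t}"
    by (rule absolutely_integrable_bounded_measurable_product_real[OF _ _ _ k])
       (auto intro: continuous_imp_measurable_on_sets_lebesgue assms
             compact_imp_bounded compact_continuous_image)
  then show ?thesis by simp
next
  case False
  then show ?thesis by simp
qed



lemma int_inv_sqrt_shift:
  assumes "a \<le> c" "h > 0"
  shows "((\<lambda>s. 1 / sqrt (s - a + h)) has_integral (2 * sqrt (c - a + h) - 2 * sqrt h)) {a..c}"
proof -
  have "((\<lambda>s. 1 / sqrt (s - a + h)) has_integral (2 * sqrt (c - a + h) - 2 * sqrt (a - a + h))) {a..c}"
  proof (rule fundamental_theorem_of_calculus_interior[OF assms(1)])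
    show "continuous_on {a..c} (\<lambda>s. 2 * sqrt (s - a + h))"
      by (intro continuous_intros)
    fix x assume x: "x \<in> {a<..<c}"
    then have "x - a + h > 0" using assms by auto
    show "((\<lambda>s. 2 * sqrt (s - a + h)) has_vector_derivative 1 / sqrt (x - a + h)) (at x)"
      unfolding has_real_derivative_iff_has_vector_derivative[symmetric]
      using \<open>x - a + h > 0\<close>
      by (auto intro!: derivative_eq_intros simp: field_simps)
  qed
  then show ?thesis by simp
qed

lemma int_arctan_kernel:
  assumes "m \<le> t" "lam > 0"
  shows "((\<lambda>s. 1 / ((1 + lam * (t - s)) * sqrt (t - s))) has_integral
            (2 / sqrt lam * arctan (sqrt (lam * (t - m))))) {m..t}"
proof -
  have "((\<lambda>s. 1 / ((1 + lam * (t - s)) * sqrt (t - s))) has_integral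
       ((- (2 / sqrt lam) * arctan (sqrt (lam * (t - t))))
        - (- (2 / sqrt lam) * arctan (sqrt (lam * (t - m)))))) {m..t}"
  proof (rule fundamental_theorem_of_calculus_interior[OF assms(1)])
    show "continuous_on {m..t} (\<lambda>s. - (2 / sqrt lam) * arctan (sqrt (lam * (t - s))))"
      by (intro continuous_intros)
    fix x assume x: "x \<in> {m<..<t}"
    then have tx: "t - x > 0" using assms by auto
    have s: "sqrt (lam * (t - x)) = sqrt lam * sqrt (t - x)" by (simp add: real_sqrt_mult)
    have l: "sqrt lam * sqrt lam = lam" using assms by simp
    have l2: "sqrt (t - x) * sqrt (t - x) = t - x" using tx by simp
    show "((\<lambda>s. - (2 / sqrt lam) * arctan (sqrt (lam * (t - s)))) has_vector_derivative
        1 / ((1 + lam * (t - x)) * sqrt (t - x))) (at x)"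
      unfolding has_real_derivative_iff_has_vector_derivative[symmetric]
    proof -
      have p: "lam * (t - x) > 0" using mult_pos_pos[OF assms(2) tx] .
      have a: "((\<lambda>s. lam*(t-s)) has_real_derivative -lam) (at x)"
        by (auto intro!: derivative_eq_intros)
      have b: "(sqrt has_real_derivative inverse (sqrt (lam*(t-x))) / 2) (at (lam*(t-x)))"
        by (rule DERIV_real_sqrt[OF p])
      have c: "(arctan has_real_derivative 1/(1 + (sqrt(lam*(t-x)))\<^sup>2)) (at (sqrt (lam*(t-x))))"
        using DERIV_arctan[of "sqrt (lam*(t-x))"] by (simp add: inverse_eq_divide)
      have d: "((\<lambda>s. arctan (sqrt (lam*(t-s)))) has_real_derivative
          1/(1 + (sqrt(lam*(t-x)))\<^sup>2) * (inverse (sqrt (lam*(t-x))) / 2 * -lam)) (at x)"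
        using DERIV_chain2[OF c DERIV_chain2[OF b a]] by simp
      have e: "((\<lambda>s. - (2 / sqrt lam) * arctan (sqrt (lam * (t - s)))) has_real_derivative
          - (2 / sqrt lam) * (1/(1 + (sqrt(lam*(t-x)))\<^sup>2) * (inverse (sqrt (lam*(t-x))) / 2 * -lam))) (at x)"
        by (rule DERIV_cmult[OF d])
      have q: "(sqrt (lam*(t-x)))\<^sup>2 = lam * (t-x)" using p by simp
      have r: "sqrt lam > 0" "sqrt (t - x) > 0" using assms tx by auto
      have "- (2 / sqrt lam) * (1/(1 + (sqrt(lam*(t-x)))\<^sup>2) * (inverse (sqrt (lam*(t-x))) / 2 * -lam))
           = 1 / ((1 + lam * (t - x)) * sqrt (t - x))"
      proof -
        have l': "\<And>z. sqrt lam * (sqrt lam * z) = lam * z" using l by (metis mult.assoc)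
        have den: "(1 + lam*(t-x)) * sqrt(t-x) > 0" using r assms tx by (simp add: add_pos_pos)
        have alg: "\<And>a z L::real. a > 0 \<Longrightarrow> z > 0 \<Longrightarrow> 1 + L > 0 \<Longrightarrow>
            -(2/a) * (1/(1+L) * (inverse (a*z)/2 * -(a*a))) = 1/((1+L)*z)"
        proof -
          fix a z L :: real assume "a > 0" "z > 0" "1 + L > 0"
          then have "(1+L)*z \<noteq> 0" "a \<noteq> 0" by auto
          then show "-(2/a) * (1/(1+L) * (inverse (a*z)/2 * -(a*a))) = 1/((1+L)*z)"
            by (simp add: field_simps)
        qed
        have "1 + lam*(t-x) > 0" using assms tx by (simp add: add_pos_pos)
        then show ?thesis unfolding q unfolding s using alg[of "sqrt lam" "sqrt (t-x)" "lam*(t-x)"] r l by simp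
      qed
      then show "((\<lambda>s. - (2 / sqrt lam) * arctan (sqrt (lam * (t - s)))) has_real_derivative 1 / ((1 + lam * (t - x)) * sqrt (t - x))) (at x)" using e by simp
    qed
  qed
  then show ?thesis by simp
qed



lemma exp_neg_le_inv: "x \<ge> 0 \<Longrightarrow> exp (- x) \<le> 1 / (1 + (x::real))"
proof -
  assume x: "x \<ge> 0"
  have "1 + x \<le> exp x" by simp
  then have "1 / exp x \<le> 1 / (1 + x)" using x by (intro divide_left_mono) auto
  then show ?thesis by (simp add: exp_minus inverse_eq_divide)
qed

lemma sqrt_exp_bound:
  assumes "lam > 0" "d \<ge> 0"
  shows "sqrt d * exp (- lam * d / 2) \<le> 1 / sqrt lam"
proof -
  have "lam * d \<le> exp (lam * d)" using exp_gt_self[of "lam*d"] by simp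
  also have "exp (lam * d) = (exp (lam * d / 2))\<^sup>2"
    by (simp add: power2_eq_square exp_add[symmetric])
  finally have "sqrt (lam * d) \<le> exp (lam * d / 2)"
    by (metis abs_of_nonneg exp_ge_zero real_sqrt_abs real_sqrt_le_iff)
  then have "sqrt lam * sqrt d \<le> exp (lam * d / 2)" by (simp add: real_sqrt_mult)
  then have "sqrt lam * (sqrt d * exp (- lam * d / 2)) \<le> exp (lam * d / 2) * exp (- lam * d / 2)"
    by (simp add: mult.assoc[symmetric])
  also have "exp (lam * d / 2) * exp (- lam * d / 2) = 1" by (simp add: exp_add[symmetric])
  finally show ?thesis using assms by (simp add: field_simps)
qed

lemma Jbound:
  fixes lam h t0 t :: real
  assumes lam: "lam > 0" and h: "h > 0" and t: "t0 \<le> t"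
  shows "exp (- lam * (t - t0)) * sqrt (t - t0 + h) *
           integral {t0..t} (\<lambda>s. exp (lam * (s - t0)) / sqrt (s - t0 + h) / sqrt (t - s))
         \<le> 2 / sqrt lam + 2 * sqrt h + sqrt 2 * pi / sqrt lam"
proof (cases "t = t0")
  case True
  then show ?thesis using lam h by simp
next
  case False
  define d where "d = t - t0"
  have d: "d > 0" using False t d_def by simp
  define m where "m = t0 + d / 2"
  have m: "t0 \<le> m" "m \<le> t" using d t unfolding m_def d_def by (auto simp: field_simps)
  define K where "K = (\<lambda>s. exp (lam * (s - t0)) / sqrt (s - t0 + h) / sqrt (t - s))"
  have "continuous_on {t0..t} (\<lambda>s. exp (lam * (s - t0)) / sqrt (s - t0 + h))"
    using h by (intro continuous_intros) auto
  then have "K absolutely_integrable_on {t0..t}"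
    unfolding K_def by (rule sing_abs_int)
  then have Kint: "K integrable_on {t0..t}" by (simp add: absolutely_integrable_on_def)
  have split: "integral {t0..t} K = integral {t0..m} K + integral {m..t} K"
    using Henstock_Kurzweil_Integration.integral_combine[OF m Kint] by simp
  have K1: "K integrable_on {t0..m}" "K integrable_on {m..t}"
    using Kint m by (auto intro: integrable_subinterval_real)
  define c1 where "c1 = exp (lam * d / 2) * (sqrt 2 / sqrt d)"
  have P1: "integral {t0..m} K \<le> c1 * (2 * sqrt (m - t0 + h) - 2 * sqrt h)"
  proof (rule has_integral_le[OF integrable_integral[OF K1(1)]
          has_integral_mult_right[OF int_inv_sqrt_shift[OF m(1) h]]])
    fix s assume s: "s \<in> {t0..m}"
    have ts: "t - s \<ge> d / 2" using s unfolding m_def d_def by (auto simp: field_simps)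
    have e: "exp (lam * (s - t0)) \<le> exp (lam * d / 2)"
      using s lam by (auto simp: m_def mult_left_mono)
    have "1 / sqrt (t - s) \<le> 1 / sqrt (d / 2)"
      using ts d by (intro divide_left_mono) (auto simp: mult_pos_pos)
    also have "1 / sqrt (d / 2) = sqrt 2 / sqrt d"
      by (simp add: real_sqrt_divide)
    finally have q: "1 / sqrt (t - s) \<le> sqrt 2 / sqrt d" .
    have "K s = exp (lam * (s - t0)) * (1 / sqrt (s - t0 + h)) * (1 / sqrt (t - s))"
      by (simp add: K_def)
    also have "\<dots> \<le> exp (lam * d / 2) * (1 / sqrt (s - t0 + h)) * (sqrt 2 / sqrt d)"
      using e q s h m by (intro mult_mono) auto
    also have "\<dots> = c1 * (1 / sqrt (s - t0 + h))" by (simp add: c1_def)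
    finally show "K s \<le> c1 * (1 / sqrt (s - t0 + h))" .
  qed
  have "sqrt (m - t0 + h) \<le> sqrt (d / 2) + sqrt h"
    using sqrt_add_le_add_sqrt[of "d/2" h] d h by (simp add: m_def)
  then have "c1 * (2 * sqrt (m - t0 + h) - 2 * sqrt h) \<le> c1 * (2 * sqrt (d / 2))"
    using d by (intro mult_left_mono) (auto simp: c1_def)
  also have "c1 * (2 * sqrt (d / 2)) = 2 * exp (lam * d / 2)"
    using d by (simp add: c1_def real_sqrt_divide)
  finally have P1': "integral {t0..m} K \<le> 2 * exp (lam * d / 2)" using P1 by simp
  define c2 where "c2 = exp (lam * d) * (sqrt 2 / sqrt (d + h))"
  have P2: "integral {m..t} K \<le> c2 * (2 / sqrt lam * arctan (sqrt (lam * (t - m))))"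
  proof (rule has_integral_le[OF integrable_integral[OF K1(2)]
          has_integral_mult_right[OF int_arctan_kernel[OF m(2) lam]]])
    fix s assume s: "s \<in> {m..t}"
    show "K s \<le> c2 * (1 / ((1 + lam * (t - s)) * sqrt (t - s)))"
    proof (cases "s = t")
      case True
      then show ?thesis by (simp add: K_def)
    next
      case False
      then have ts: "t - s > 0" using s by auto
      have "exp (lam * (s - t0)) = exp (lam * d) * exp (- (lam * (t - s)))"
        by (simp add: exp_add[symmetric] d_def algebra_simps)
      also have "\<dots> \<le> exp (lam * d) * (1 / (1 + lam * (t - s)))"
        using ts lam by (intro mult_left_mono exp_neg_le_inv) auto
      finally have e: "exp (lam * (s - t0)) \<le> exp (lam * d) * (1 / (1 + lam * (t - s)))" .
      have p1: "1 + lam * (t - s) > 0" using ts lam by (simp add: add_pos_pos)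
      have sh: "s - t0 + h \<ge> (d + h) / 2" using s h unfolding m_def by (auto simp: field_simps)
      have "1 / sqrt (s - t0 + h) \<le> 1 / sqrt ((d + h) / 2)"
        using sh d h by (intro divide_left_mono) auto
      also have "1 / sqrt ((d + h) / 2) = sqrt 2 / sqrt (d + h)"
        by (simp add: real_sqrt_divide)
      finally have q: "1 / sqrt (s - t0 + h) \<le> sqrt 2 / sqrt (d + h)" .
      have "K s = exp (lam * (s - t0)) * (1 / sqrt (s - t0 + h)) * (1 / sqrt (t - s))"
        by (simp add: K_def)
      also have "\<dots> \<le> (exp (lam * d) * (1 / (1 + lam * (t - s)))) * (sqrt 2 / sqrt (d + h)) * (1 / sqrt (t - s))"
        using e q s h ts m d lam p1 by (intro mult_mono) auto
      also have "\<dots> = c2 * (1 / ((1 + lam * (t - s)) * sqrt (t - s)))"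
        by (simp add: c2_def)
      finally show ?thesis .
    qed
  qed
  have "arctan (sqrt (lam * (t - m))) \<le> pi / 2" using arctan_ubound less_imp_le by blast
  then have "c2 * (2 / sqrt lam * arctan (sqrt (lam * (t - m)))) \<le> c2 * (2 / sqrt lam * (pi / 2))"
    using lam d h by (intro mult_left_mono) (auto simp: c2_def)
  then have P2': "integral {m..t} K \<le> c2 * (pi / sqrt lam)" using P2 by simp
  define E where "E = exp (- lam * d) * sqrt (d + h)"
  have E0: "E \<ge> 0" using d h by (simp add: E_def)
  have "E * integral {t0..t} K \<le> E * (2 * exp (lam * d / 2) + c2 * (pi / sqrt lam))"
    unfolding split using P1' P2' E0 by (intro mult_left_mono) auto
  also have "\<dots> = 2 * (sqrt (d + h) * exp (- lam * d / 2)) + sqrt 2 * pi / sqrt lam"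
  proof -
    have a: "exp (- lam * d) * exp (lam * d / 2) = exp (- lam * d / 2)"
      by (simp add: exp_add[symmetric])
    have b: "exp (- lam * d) * exp (lam * d) = 1"
      by (simp add: exp_add[symmetric])
    have sp: "sqrt (d + h) > 0" using d h by simp
    have e1: "E * exp (lam * d / 2) = sqrt (d + h) * exp (- lam * d / 2)"
      unfolding E_def using a by (metis mult.assoc mult.commute)
    have e2: "E * c2 = sqrt 2"
    proof -
      have "E * c2 = (exp (- lam * d) * exp (lam * d)) * (sqrt (d + h) * (sqrt 2 / sqrt (d + h)))"
        unfolding E_def c2_def by (simp only: ac_simps)
      also have "\<dots> = sqrt 2" using b sp by simp
      finally show ?thesis .
    qed
    have "E * (2 * exp (lam * d / 2) + c2 * (pi / sqrt lam)) = 2 * (E * exp (lam * d / 2)) + (E * c2) * (pi / sqrt lam)"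
      by (simp only: algebra_simps)
    then show ?thesis unfolding e1 e2 by simp
  qed
  also have "\<dots> \<le> 2 / sqrt lam + 2 * sqrt h + sqrt 2 * pi / sqrt lam"
  proof -
    have "sqrt (d + h) * exp (- lam * d / 2) \<le> (sqrt d + sqrt h) * exp (- lam * d / 2)"
      using sqrt_add_le_add_sqrt[of d h] d h by (intro mult_right_mono) auto
    also have "\<dots> = sqrt d * exp (- lam * d / 2) + sqrt h * exp (- lam * d / 2)"
      by (simp add: algebra_simps)
    also have "\<dots> \<le> 1 / sqrt lam + sqrt h * 1"
      using sqrt_exp_bound[OF lam, of d] d lam h
      by (intro add_mono mult_left_mono) auto
    finally show ?thesis by simp
  qed
  finally show ?thesis unfolding E_def K_def d_def by simp
qed



lemma cont_bound:
  fixes w :: "real \<Rightarrow> 'a::euclidean_space"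
  assumes "continuous_on {t0..} w"
  shows "\<exists>W\<ge>0. \<forall>s\<in>{t0..T}. norm (w s) \<le> W"
proof -
  have "continuous_on {t0..T} w" using assms by (rule continuous_on_subset) auto
  then have "bounded (w ` {t0..T})" by (intro compact_imp_bounded compact_continuous_image) auto
  then obtain a where "\<forall>x\<in>w ` {t0..T}. norm x \<le> a" by (auto simp: bounded_iff)
  then show ?thesis by (intro exI[of _ "max a 0"]) auto
qed

lemma sqrt_diff_le: 
  assumes "d \<ge> 0" "h > 0"
  shows "2 * sqrt (d + h) - 2 * sqrt d \<le> 2 * h / sqrt (d + h)"
proof -
  define a where "a = sqrt (d + h)"
  define b where "b = sqrt d"
  have a: "a > 0" "a\<^sup>2 = d + h" using assms by (auto simp: a_def)
  have b: "b \<ge> 0" "b\<^sup>2 = d" using assms by (auto simp: b_def)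
  have "b \<le> a" using assms by (auto simp: a_def b_def)
  then have "(a - b) * a \<le> (a - b) * (a + b)" using b by (intro mult_left_mono) auto
  also have "\<dots> = h" using a b by (simp add: algebra_simps power2_eq_square)
  finally have "a - b \<le> h / a" using a by (simp add: field_simps)
  then show ?thesis unfolding a_def[symmetric] b_def[symmetric] by simp
qed



lemma div_exp_neg: "(S::real) / (exp (- l * x) * q) = S * exp (l * x) / q"
proof -
  have "exp (- l * x) = inverse (exp (l * x))" by (simp add: exp_minus[symmetric])
  then have "S / (exp (- l * x) * q) = S / (inverse (exp (l * x)) * q)" by simp
  also have "\<dots> = S * exp (l * x) / q"
    by (simp add: divide_inverse inverse_mult_distrib mult.commute mult.left_commute)
  finally show ?thesis .
qed

lemma core:
  fixes w F :: "real \<Rightarrow> 'a::euclidean_space"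
  assumes k: "k > 0"
    and wc: "continuous_on {t0..} w" and Fc: "continuous_on {t0..} F"
    and keq: "\<And>t. t \<ge> t0 \<Longrightarrow> ((\<lambda>s. (k / sqrt (t - s)) *\<^sub>R w s) has_integral
                                   (w0 + integral {t0..t} F - w t)) {t0..t}"
  shows "\<exists>h0>0. \<forall>T. \<exists>C\<ge>0. \<forall>t h. t0 \<le> t \<longrightarrow> 0 < h \<longrightarrow> h \<le> h0 \<longrightarrow> t + h \<le> T \<longrightarrow>
            norm (w (t + h) - w t) \<le> C * h / sqrt (t - t0 + h)"
proof -
  define lam where "lam = (40 * k)\<^sup>2"
  have "sqrt lam = \<bar>40 * k\<bar>" unfolding lam_def by (rule real_sqrt_abs)
  then have lam: "lam > 0" "sqrt lam = 40 * k" using k by (auto simp: lam_def)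
  define h0 where "h0 = 1 / (64 * k\<^sup>2)"
  have h0: "h0 > 0" using k by (simp add: h0_def)
  have sh0: "sqrt h0 = 1 / (8 * k)" using k
    by (simp add: h0_def real_sqrt_divide real_sqrt_mult power2_eq_square)
  have s2: "sqrt 2 \<le> 3 / 2"
  proof -
    have "sqrt 2 \<le> sqrt ((3/2)\<^sup>2)" by (intro real_sqrt_le_mono) (simp add: power2_eq_square)
    then show ?thesis by simp
  qed
  have Jk: "k * (2 / sqrt lam + 2 * sqrt h + sqrt 2 * pi / sqrt lam) \<le> 1 / 2"
    if "0 < h" "h \<le> h0" for h
  proof -
    have "sqrt h \<le> sqrt h0" using that by simp
    then have "2 * k * sqrt h \<le> 2 * k * (1 / (8 * k))" using k sh0 by (intro mult_left_mono) auto
    also have "\<dots> = 1 / 4" using k by simp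
    finally have A: "2 * k * sqrt h \<le> 1 / 4" .
    have "sqrt 2 * pi \<le> 3 / 2 * 4" using s2 pi_less_4 by (intro mult_mono) auto
    then have B: "k * (2 / sqrt lam + sqrt 2 * pi / sqrt lam) \<le> 1 / 5"
      using k by (simp add: lam field_simps)
    have "k * (2 / sqrt lam + 2 * sqrt h + sqrt 2 * pi / sqrt lam)
          = k * (2 / sqrt lam + sqrt 2 * pi / sqrt lam) + 2 * k * sqrt h"
      by (simp add: algebra_simps)
    also have "\<dots> \<le> 1/5 + 1/4" using A B by linarith
    finally show ?thesis by linarith
  qed
  have "\<forall>T. \<exists>C\<ge>0. \<forall>t h. t0 \<le> t \<longrightarrow> 0 < h \<longrightarrow> h \<le> h0 \<longrightarrow> t + h \<le> T \<longrightarrow>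
            norm (w (t + h) - w t) \<le> C * h / sqrt (t - t0 + h)"
  proof
    fix T
    show "\<exists>C\<ge>0. \<forall>t h. t0 \<le> t \<longrightarrow> 0 < h \<longrightarrow> h \<le> h0 \<longrightarrow> t + h \<le> T \<longrightarrow>
            norm (w (t + h) - w t) \<le> C * h / sqrt (t - t0 + h)"
    proof (cases "T < t0")
      case True
      then show ?thesis by (intro exI[of _ 0]) auto
    next
      case False
      then have T: "t0 \<le> T" by simp
      obtain W where W: "W \<ge> 0" "\<And>s. s \<in> {t0..T} \<Longrightarrow> norm (w s) \<le> W"
        using cont_bound[OF wc, of T] by blast
      obtain MF where MF: "MF \<ge> 0" "\<And>s. s \<in> {t0..T} \<Longrightarrow> norm (F s) \<le> MF"
        using cont_bound[OF Fc, of T] by blast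
      define C1 where "C1 = sqrt (T - t0) * MF + 2 * k * W"
      have C1: "C1 \<ge> 0" using W MF k T by (simp add: C1_def)
      define C where "C = 2 * C1 * exp (lam * (T - t0))"
      show ?thesis
      proof (intro exI[of _ C] conjI allI impI)
        show "C \<ge> 0" using C1 by (simp add: C_def)
        fix t h assume t: "t0 \<le> t" and h: "0 < h" "h \<le> h0" and tT: "t + h \<le> T"
        define \<phi> where "\<phi> = (\<lambda>s. norm (w (s + h) - w s))"
        define \<rho> where "\<rho> = (\<lambda>s. exp (- lam * (s - t0)) * sqrt (s - t0 + h))"
        have \<rho>pos: "\<rho> s > 0" if "s \<ge> t0" for s using that h by (simp add: \<rho>_def)
        have wsh: "continuous_on {t0..T-h} (\<lambda>s. w (s + h))"
          by (rule continuous_on_compose2[OF wc]) (use h in \<open>auto intro!: continuous_intros\<close>)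
        have w1: "continuous_on {t0..T-h} w" using wc by (rule continuous_on_subset) auto
        have \<phi>c: "continuous_on {t0..T-h} \<phi>" unfolding \<phi>_def
          by (intro continuous_intros wsh w1)
        have "continuous_on {t0..T-h} (\<lambda>s. \<rho> s * \<phi> s)" unfolding \<rho>_def
          using h by (intro continuous_intros \<phi>c)
        then obtain ts where ts: "ts \<in> {t0..T-h}" and tsmax: "\<And>s. s \<in> {t0..T-h} \<Longrightarrow> \<rho> s * \<phi> s \<le> \<rho> ts * \<phi> ts"
          using continuous_attains_sup[of "{t0..T-h}" "\<lambda>s. \<rho> s * \<phi> s"] t tT by auto
        define S where "S = \<rho> ts * \<phi> ts"
        have S0: "S \<ge> 0" using \<rho>pos[of ts] ts by (simp add: S_def \<phi>_def)
        have key: "\<rho> \<tau> * \<phi> \<tau> \<le> C1 * h + S / 2" if \<tau>: "\<tau> \<in> {t0..T-h}" for \<tau>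
        proof -
          have \<tau>0: "t0 \<le> \<tau>" "\<tau> + h \<le> T" using \<tau> by auto
          define d where "d = \<tau> - t0"
          have d: "d \<ge> 0" using \<tau>0 by (simp add: d_def)
          define IF where "IF = (\<lambda>t'. integral {t0..t'} F)"
          define kern where "kern = (\<lambda>t' s. (k / sqrt (t' - s)) *\<^sub>R w s)"
          have Fint: "F integrable_on {a..b}" if "t0 \<le> a" for a b
            by (intro integrable_continuous_real continuous_on_subset[OF Fc]) (use that in auto)
          have K1: "(kern (\<tau>+h) has_integral (w0 + IF (\<tau>+h) - w (\<tau>+h))) {t0..\<tau>+h}"
            using keq[of "\<tau>+h"] h \<tau>0 by (simp add: kern_def IF_def)
          have K0: "(kern \<tau> has_integral (w0 + IF \<tau> - w \<tau>)) {t0..\<tau>}"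
            using keq[of "\<tau>"] \<tau>0 by (simp add: kern_def IF_def)
          have "IF \<tau> + integral {\<tau>..\<tau>+h} F = IF (\<tau>+h)"
            unfolding IF_def using Henstock_Kurzweil_Integration.integral_combine[of t0 \<tau> "\<tau>+h" F] Fint[of t0 "\<tau>+h"] \<tau>0 h by auto
          then have IFd: "IF (\<tau>+h) - IF \<tau> = integral {\<tau>..\<tau>+h} F" by (simp add: algebra_simps)
          have nF: "norm (IF (\<tau>+h) - IF \<tau>) \<le> MF * h"
          proof -
            have "norm (integral {\<tau>..\<tau>+h} F) \<le> MF * ((\<tau>+h) - \<tau>)"
              by (rule integral_bound) (use h \<tau>0 MF in \<open>auto intro: continuous_on_subset[OF Fc]\<close>)
            then show ?thesis using IFd by simp
          qed
          define I1 where "I1 = integral {t0..t0+h} (kern (\<tau>+h))"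
          define I2 where "I2 = integral {t0+h..\<tau>+h} (kern (\<tau>+h))"
          have Kint: "kern (\<tau>+h) integrable_on {t0..\<tau>+h}" using K1 by blast
          have I1int: "kern (\<tau>+h) integrable_on {t0..t0+h}"
            using Kint by (rule integrable_subinterval_real) (use \<tau>0 in auto)
          have I2int: "kern (\<tau>+h) integrable_on {t0+h..\<tau>+h}"
            using Kint by (rule integrable_subinterval_real) (use \<tau>0 h in auto)
          have I12: "I1 + I2 = w0 + IF (\<tau>+h) - w (\<tau>+h)"
            unfolding I1_def I2_def
            using Henstock_Kurzweil_Integration.integral_combine[of t0 "t0+h" "\<tau>+h" "kern (\<tau>+h)"] Kint \<tau>0 h K1
            by (auto dest: integral_unique)
          define g where "g = (\<lambda>s. (k / sqrt (\<tau> - s)) *\<^sub>R w (s + h))"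
          have "kern (\<tau>+h) \<circ> (+) h = g"
            by (auto simp: kern_def g_def algebra_simps)
          then have gI: "(g has_integral I2) {t0..\<tau>}"
            using has_integral_shift_Icc_real[of "kern (\<tau>+h)" h I2 t0 \<tau>] I2int
            unfolding I2_def by (simp add: integrable_integral)
          define D where "D = (\<lambda>s. (k / sqrt (\<tau> - s)) *\<^sub>R (w (s + h) - w s))"
          have DI: "(D has_integral (I2 - (w0 + IF \<tau> - w \<tau>))) {t0..\<tau>}"
          proof -
            have "((\<lambda>s. g s - kern \<tau> s) has_integral (I2 - (w0 + IF \<tau> - w \<tau>))) {t0..\<tau>}"
              by (rule has_integral_diff[OF gI K0])
            moreover have "(\<lambda>s. g s - kern \<tau> s) = D"
              by (auto simp: g_def kern_def D_def scaleR_diff_right)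
            ultimately show ?thesis by simp
          qed
          have \<phi>c2: "continuous_on {t0..\<tau>} (\<lambda>s. k * \<phi> s)"
            by (intro continuous_intros continuous_on_subset[OF \<phi>c]) (use \<tau>0 in auto)
          have maj2: "(\<lambda>s. k * \<phi> s / sqrt (\<tau> - s)) integrable_on {t0..\<tau>}"
            using sing_abs_int[OF \<phi>c2] by (simp add: absolutely_integrable_on_def)
          have n2: "norm (I2 - (w0 + IF \<tau> - w \<tau>)) \<le> integral {t0..\<tau>} (\<lambda>s. k * \<phi> s / sqrt (\<tau> - s))"
          proof -
            have "norm (integral {t0..\<tau>} D) \<le> integral {t0..\<tau>} (\<lambda>s. k * \<phi> s / sqrt (\<tau> - s))"
              by (rule integral_norm_bound_integral[OF _ maj2]) (use DI k in \<open>auto simp: D_def \<phi>_def\<close>)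
            then show ?thesis using DI by (simp add: integral_unique)
          qed
          have n1: "norm I1 \<le> k * W * (2 * sqrt (\<tau> + h - t0) - 2 * sqrt (\<tau> + h - (t0 + h)))"
          proof -
            have mi: "((\<lambda>s. k * W * (1 / sqrt (\<tau> + h - s))) has_integral
                 k * W * (2 * sqrt (\<tau> + h - t0) - 2 * sqrt (\<tau> + h - (t0 + h)))) {t0..t0+h}"
              by (rule has_integral_mult_right[OF sing_kernel_int]) (use h \<tau>0 in auto)
            have "norm I1 \<le> integral {t0..t0+h} (\<lambda>s. k * W * (1 / sqrt (\<tau> + h - s)))"
              unfolding I1_def
            proof (rule integral_norm_bound_integral[OF I1int])
              show "(\<lambda>s. k * W * (1 / sqrt (\<tau> + h - s))) integrable_on {t0..t0+h}" using mi by blast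
              fix s assume s: "s \<in> {t0..t0+h}"
              then have "norm (w s) \<le> W" using W(2)[of s] \<tau>0 by auto
              then show "norm (kern (\<tau>+h) s) \<le> k * W * (1 / sqrt (\<tau> + h - s))"
                using k s \<tau>0 by (auto simp: kern_def divide_simps mult_left_mono)
            qed
            then show ?thesis using mi by (simp add: integral_unique)
          qed
          have n1': "norm I1 \<le> k * W * (2 * h / sqrt (d + h))"
          proof -
            have "2 * sqrt (\<tau> + h - t0) - 2 * sqrt (\<tau> + h - (t0 + h)) \<le> 2 * h / sqrt (d + h)"
              using sqrt_diff_le[OF d h(1)] by (simp add: d_def algebra_simps)
            then show ?thesis using n1 k W by (meson mult_left_mono order_trans mult_nonneg_nonneg less_imp_le)
          qed
          have phi: "\<phi> \<tau> \<le> MF * h + k * W * (2 * h / sqrt (d + h)) + integral {t0..\<tau>} (\<lambda>s. k * \<phi> s / sqrt (\<tau> - s))"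
          proof -
            have "w (\<tau>+h) - w \<tau> = (IF (\<tau>+h) - IF \<tau>) - I1 - (I2 - (w0 + IF \<tau> - w \<tau>))"
              using I12 by (simp add: algebra_simps)
            then have "\<phi> \<tau> = norm ((IF (\<tau>+h) - IF \<tau>) - I1 - (I2 - (w0 + IF \<tau> - w \<tau>)))"
              unfolding \<phi>_def by (rule arg_cong[where f=norm])
            also have "\<dots> \<le> norm ((IF (\<tau>+h) - IF \<tau>) - I1) + norm (I2 - (w0 + IF \<tau> - w \<tau>))"
              by (rule norm_triangle_ineq4)
            also have "norm ((IF (\<tau>+h) - IF \<tau>) - I1) \<le> norm (IF (\<tau>+h) - IF \<tau>) + norm I1"
              by (rule norm_triangle_ineq4)
            finally have "\<phi> \<tau> \<le> norm (IF (\<tau>+h) - IF \<tau>) + norm I1 + norm (I2 - (w0 + IF \<tau> - w \<tau>))"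
              by simp
            then show ?thesis using nF n1' n2 by linarith
          qed
          define Q where "Q = integral {t0..\<tau>} (\<lambda>s. exp (lam * (s - t0)) / sqrt (s - t0 + h) / sqrt (\<tau> - s))"
          have qint: "(\<lambda>s. exp (lam * (s - t0)) / sqrt (s - t0 + h) / sqrt (\<tau> - s)) integrable_on {t0..\<tau>}"
          proof -
            have "continuous_on {t0..\<tau>} (\<lambda>s. exp (lam * (s - t0)) / sqrt (s - t0 + h))"
              using h by (intro continuous_intros) auto
            from sing_abs_int[OF this] show ?thesis by (rule absolutely_integrable_on_def[THEN iffD1, THEN conjunct1])
          qed
          have iQ: "integral {t0..\<tau>} (\<lambda>s. k * \<phi> s / sqrt (\<tau> - s)) \<le> k * S * Q"
          proof -
            have iQ0: "integral {t0..\<tau>} (\<lambda>s. k * \<phi> s / sqrt (\<tau> - s))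
                  \<le> integral {t0..\<tau>} (\<lambda>s. k * S * (exp (lam * (s - t0)) / sqrt (s - t0 + h) / sqrt (\<tau> - s)))"
            proof -
            have qint2: "(\<lambda>s. k * S * (exp (lam * (s - t0)) / sqrt (s - t0 + h) / sqrt (\<tau> - s))) integrable_on {t0..\<tau>}"
              using integrable_on_cmult_left[OF qint, of "k * S"] by simp
            show ?thesis
            proof (rule integral_le[OF maj2 qint2])
              fix s assume s: "s \<in> {t0..\<tau>}"
              then have "\<rho> s * \<phi> s \<le> S" using tsmax[of s] \<tau>0 by (auto simp: S_def)
              then have "\<phi> s \<le> S / \<rho> s" using \<rho>pos[of s] s by (simp add: field_simps)
              also have "S / \<rho> s = S * exp (lam * (s - t0)) / sqrt (s - t0 + h)"
                unfolding \<rho>_def by (rule div_exp_neg)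
              finally have "\<phi> s \<le> S * exp (lam * (s - t0)) / sqrt (s - t0 + h)" .
              then have "k * \<phi> s / sqrt (\<tau> - s) \<le> k * (S * exp (lam * (s - t0)) / sqrt (s - t0 + h)) / sqrt (\<tau> - s)"
                using k s by (intro divide_right_mono mult_left_mono) auto
              then show "k * \<phi> s / sqrt (\<tau> - s) \<le> k * S * (exp (lam * (s - t0)) / sqrt (s - t0 + h) / sqrt (\<tau> - s))"
                by simp
            qed
            qed
            moreover have "integral {t0..\<tau>} (\<lambda>s. k * S * (exp (lam * (s - t0)) / sqrt (s - t0 + h) / sqrt (\<tau> - s))) = k * S * Q"
              unfolding Q_def by (rule integral_mult_right)
            ultimately show ?thesis by linarith
          qed
          have JQ: "\<rho> \<tau> * Q \<le> 2 / sqrt lam + 2 * sqrt h + sqrt 2 * pi / sqrt lam"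
            using Jbound[OF lam(1) h(1) \<tau>0(1)] by (simp add: \<rho>_def Q_def)
          have e1: "exp (- lam * (\<tau> - t0)) \<le> 1" using lam \<tau>0 by simp
          have r1: "\<rho> \<tau> \<le> sqrt (T - t0)"
          proof -
            have "\<rho> \<tau> \<le> 1 * sqrt (\<tau> - t0 + h)" unfolding \<rho>_def using e1 \<tau>0 h by (intro mult_right_mono) auto
            also have "\<dots> \<le> sqrt (T - t0)" using \<tau>0 by simp
            finally show ?thesis .
          qed
          have r2: "\<rho> \<tau> * (k * W * (2 * h / sqrt (d + h))) \<le> 2 * k * W * h"
          proof -
            have "sqrt (d + h) > 0" using d h by simp
            then have "\<rho> \<tau> * (k * W * (2 * h / sqrt (d + h))) = exp (- lam * (\<tau> - t0)) * (2 * k * W * h)"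
              by (simp add: \<rho>_def d_def)
            also have "\<dots> \<le> 1 * (2 * k * W * h)" using e1 k W h by (intro mult_right_mono) auto
            finally show ?thesis by simp
          qed
          have "\<rho> \<tau> * \<phi> \<tau> \<le> \<rho> \<tau> * (MF * h + k * W * (2 * h / sqrt (d + h)) + k * S * Q)"
            using phi iQ \<rho>pos[of \<tau>] \<tau>0 by (intro mult_left_mono) auto
          also have "\<dots> = \<rho> \<tau> * MF * h + \<rho> \<tau> * (k * W * (2 * h / sqrt (d + h))) + S * (k * (\<rho> \<tau> * Q))"
            by (simp add: algebra_simps)
          also have "\<dots> \<le> sqrt (T - t0) * MF * h + 2 * k * W * h + S * (1 / 2)"
          proof (intro add_mono r2)
            show "\<rho> \<tau> * MF * h \<le> sqrt (T - t0) * MF * h" using r1 MF h by (intro mult_right_mono) auto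
            have "k * (\<rho> \<tau> * Q) \<le> k * (2 / sqrt lam + 2 * sqrt h + sqrt 2 * pi / sqrt lam)"
              using JQ k by (intro mult_left_mono) auto
            also have "\<dots> \<le> 1 / 2" using Jk[OF h] .
            finally show "S * (k * (\<rho> \<tau> * Q)) \<le> S * (1 / 2)" using S0 by (intro mult_left_mono) auto
          qed
          also have "\<dots> = C1 * h + S / 2" by (simp add: C1_def algebra_simps)
          finally show ?thesis .
        qed
        have "S \<le> C1 * h + S / 2" using key[OF ts] by (simp add: S_def)
        then have SB: "S \<le> 2 * C1 * h" by simp
        have "\<rho> t * \<phi> t \<le> S" using tsmax[of t] t tT by (simp add: S_def)
        then have "\<phi> t \<le> S / \<rho> t" using \<rho>pos[OF t] by (simp add: field_simps)
        also have "S / \<rho> t = S * exp (lam * (t - t0)) / sqrt (t - t0 + h)"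
          unfolding \<rho>_def by (rule div_exp_neg)
        also have "\<dots> \<le> (2 * C1 * h) * exp (lam * (T - t0)) / sqrt (t - t0 + h)"
          using SB S0 lam tT h t
          by (intro divide_right_mono mult_mono) auto
        finally show "norm (w (t + h) - w t) \<le> C * h / sqrt (t - t0 + h)"
          by (simp add: \<phi>_def C_def algebra_simps)
      qed
    qed
  qed
  then show ?thesis using h0 by blast
qed



lemma space_bound:
  fixes F :: "real^'n \<Rightarrow> real \<Rightarrow> 'b::real_normed_vector"
  assumes der: "\<And>z i. z \<in> D \<Longrightarrow> ((\<lambda>h. F (z + h *\<^sub>R axis i 1) t) has_vector_derivative pdx i F z t) (at 0)"
    and bnd: "\<And>z i. z \<in> D \<Longrightarrow> norm (pdx i F z t) \<le> L"
    and sub: "\<And>z. norm (z - x) \<le> norm (x' - x) \<Longrightarrow> z \<in> D"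
  shows "norm (F x' t - F x t) \<le> L * (\<Sum>i\<in>UNIV. \<bar>x'$i - x$i\<bar>)"
proof -
  define zz where "zz = (\<lambda>S. (\<chi> j. if j \<in> S then x'$j else x$j) :: real^'n)"
  have gen: "norm (F (zz S) t - F x t) \<le> L * (\<Sum>i\<in>S. \<bar>x'$i - x$i\<bar>)" if "finite S" for S
    using that
  proof (induction S rule: finite_induct)
    case empty
    have "zz {} = x" by (simp add: zz_def vec_eq_iff)
    then show ?case by simp
  next
    case (insert i S)
    define \<delta> where "\<delta> = x'$i - x$i"
    have zi: "zz (insert i S) = zz S + \<delta> *\<^sub>R axis i 1"
      using insert(2) by (auto simp: vec_eq_iff zz_def axis_def \<delta>_def)
    define I where "I = {min 0 \<delta>..max 0 \<delta>}"
    have inD: "zz S + h *\<^sub>R axis i 1 \<in> D" if h: "h \<in> I" for h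
    proof (rule sub, rule norm_le_componentwise_cart)
      fix j
      show "norm ((zz S + h *\<^sub>R axis i 1 - x) $ j) \<le> norm ((x' - x) $ j)"
        using h insert(2) by (auto simp: zz_def axis_def I_def \<delta>_def)
    qed
    define f where "f = (\<lambda>h. F (zz S + h *\<^sub>R axis i 1) t)"
    have fd: "(f has_vector_derivative pdx i F (zz S + h1 *\<^sub>R axis i 1) t) (at h1 within I)"
      if h1: "h1 \<in> I" for h1
    proof -
      define z where "z = zz S + h1 *\<^sub>R axis i 1"
      have g: "((\<lambda>k. F (z + k *\<^sub>R axis i 1) t) has_vector_derivative pdx i F z t) (at ((\<lambda>h. h - h1) h1))"
        using der[OF inD[OF h1], of i] by (simp add: z_def)
      have "((\<lambda>h. h - h1) has_vector_derivative 1) (at h1)"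
        by (auto intro!: derivative_eq_intros)
      from vector_diff_chain_at[OF this g]
      have "(((\<lambda>k. F (z + k *\<^sub>R axis i 1) t) \<circ> (\<lambda>h. h - h1)) has_vector_derivative pdx i F z t) (at h1)"
        by simp
      moreover have "((\<lambda>k. F (z + k *\<^sub>R axis i 1) t) \<circ> (\<lambda>h. h - h1)) = f"
        by (auto simp: f_def z_def o_def algebra_simps)
      ultimately show ?thesis by (simp add: z_def has_vector_derivative_at_within)
    qed
    have "norm (f \<delta> - f 0) \<le> L * \<bar>\<delta> - 0\<bar>"
      by (rule mvt_vec[of I f "\<lambda>h. pdx i F (zz S + h *\<^sub>R axis i 1) t"])
         (auto simp: I_def intro: fd[unfolded I_def] bnd[OF inD[unfolded I_def]])
    then have "norm (F (zz (insert i S)) t - F (zz S) t) \<le> L * \<bar>x'$i - x$i\<bar>"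
      by (simp add: f_def zi \<delta>_def)
    then have "norm (F (zz (insert i S)) t - F x t) \<le> L * \<bar>x'$i - x$i\<bar> + L * (\<Sum>i\<in>S. \<bar>x'$i - x$i\<bar>)"
      using insert(3) norm_triangle_le[of "F (zz (insert i S)) t - F (zz S) t" "F (zz S) t - F x t"]
      by simp
    then show ?case using insert(1,2) by (simp add: algebra_simps)
  qed
  have zU: "zz UNIV = x'" by (simp add: zz_def vec_eq_iff)
  have "finite (UNIV :: 'n set)" by simp
  from gen[OF this] show ?thesis unfolding zU .
qed

lemma time_bound:
  fixes F :: "real^'n \<Rightarrow> real \<Rightarrow> 'b::real_normed_vector"
  assumes "\<And>s. s \<ge> t0 \<Longrightarrow> ((\<lambda>s. F x s) has_vector_derivative pdt {t0..} F x s) (at s within {t0..})"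
    and "\<And>s. s \<ge> t0 \<Longrightarrow> norm (pdt {t0..} F x s) \<le> L"
    and "s1 \<ge> t0" "s2 \<ge> t0"
  shows "norm (F x s1 - F x s2) \<le> L * \<bar>s1 - s2\<bar>"
  by (rule mvt_vec[of "{t0..}" "\<lambda>s. F x s" "pdt {t0..} F x"]) (use assms in auto)

lemma C1_comp_cont:
  fixes F :: "real^'n \<Rightarrow> real \<Rightarrow> 'b::real_normed_vector"
  assumes D: "open D" and C1: "C1_bounded D t0 F L" and yc: "continuous_on {t0..} y"
    and yD: "\<And>t. t \<ge> t0 \<Longrightarrow> y t \<in> D"
  shows "continuous_on {t0..} (\<lambda>s. F (y s) s)"
  unfolding continuous_on_def
proof
  fix s1 assume s1: "s1 \<in> {t0..}"
  obtain r where r: "r > 0" "ball (y s1) r \<subseteq> D" using D yD s1 open_contains_ball by force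
  have ytend: "(y \<longlongrightarrow> y s1) (at s1 within {t0..})" using yc s1 by (simp add: continuous_on_def)
  have ev1: "eventually (\<lambda>s. dist (y s) (y s1) < r) (at s1 within {t0..})"
    using tendstoD[OF ytend r(1)] .
  have ev2: "eventually (\<lambda>s. s \<in> {t0..}) (at s1 within {t0..})"
    by (simp add: eventually_at_filter)
  have C1': "\<And>x t. x \<in> D \<Longrightarrow> t \<ge> t0 \<Longrightarrow>
        ((\<lambda>s. F x s) has_vector_derivative pdt {t0..} F x t) (at t within {t0..}) \<and>
        norm (pdt {t0..} F x t) \<le> L \<and>
        (\<forall>i. ((\<lambda>h. F (x + h *\<^sub>R axis i 1) t) has_vector_derivative pdx i F x t) (at 0) \<and>
             norm (pdx i F x t) \<le> L)"
    using C1 unfolding C1_bounded_def by (meson less_imp_le)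
  have bound: "norm (F (y s) s - F (y s1) s1) \<le> L * \<bar>s - s1\<bar> + L * (\<Sum>i\<in>UNIV. \<bar>y s$i - y s1$i\<bar>)"
    if s: "dist (y s) (y s1) < r" "s \<in> {t0..}" for s
  proof -
    have a: "norm (F (y s) s - F (y s) s1) \<le> L * \<bar>s - s1\<bar>"
      by (rule time_bound[of t0]) (use C1' yD s s1 in auto)
    have b: "norm (F (y s) s1 - F (y s1) s1) \<le> L * (\<Sum>i\<in>UNIV. \<bar>y s$i - y s1$i\<bar>)"
    proof (rule space_bound[of D])
      show "\<And>z i. z \<in> D \<Longrightarrow> ((\<lambda>h. F (z + h *\<^sub>R axis i 1) s1) has_vector_derivative pdx i F z s1) (at 0)"
        using C1' s1 by auto
      show "\<And>z i. z \<in> D \<Longrightarrow> norm (pdx i F z s1) \<le> L"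
        using C1' s1 by auto
      fix z assume "norm (z - y s1) \<le> norm (y s - y s1)"
      then have "dist (y s1) z < r" using s by (simp add: dist_norm norm_minus_commute)
      then show "z \<in> D" using r by auto
    qed
    show ?thesis using norm_triangle_le[OF add_mono[OF a b]] by simp
  qed
  have "((\<lambda>s. F (y s) s - F (y s1) s1) \<longlongrightarrow> 0) (at s1 within {t0..})"
  proof (rule Lim_null_comparison)
    show "eventually (\<lambda>s. norm (F (y s) s - F (y s1) s1) \<le>
             L * \<bar>s - s1\<bar> + L * (\<Sum>i\<in>UNIV. \<bar>y s$i - y s1$i\<bar>)) (at s1 within {t0..})"
      using eventually_conj[OF ev1 ev2] by (rule eventually_mono) (use bound in auto)
    have "((\<lambda>s. L * \<bar>s - s1\<bar> + L * (\<Sum>i\<in>UNIV. \<bar>y s$i - y s1$i\<bar>)) \<longlongrightarrow>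
           L * \<bar>s1 - s1\<bar> + L * (\<Sum>i\<in>UNIV. \<bar>y s1$i - y s1$i\<bar>)) (at s1 within {t0..})"
      by (intro tendsto_intros ytend)
    then show "((\<lambda>s. L * \<bar>s - s1\<bar> + L * (\<Sum>i\<in>UNIV. \<bar>y s$i - y s1$i\<bar>)) \<longlongrightarrow> 0) (at s1 within {t0..})"
      by simp
  qed
  then show "((\<lambda>s. F (y s) s) \<longlongrightarrow> F (y s1) s1) (at s1 within {t0..})"
    by (simp add: LIM_zero_iff)
qed



lemma pdx_A:
  assumes "((\<lambda>h. u (x + h *\<^sub>R axis j 1) t) has_vector_derivative pdx j u x t) (at 0)"
    "((\<lambda>h. lap u (x + h *\<^sub>R axis j 1) t) has_vector_derivative pdx j (lap u) x t) (at 0)"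
  shows "pdx j (A_u mu gam u) x t = pdx j u x t + (gam / 6 / mu) *\<^sub>R pdx j (lap u) x t"
proof -
  have "((\<lambda>h. A_u mu gam u (x + h *\<^sub>R axis j 1) t) has_vector_derivative
          (pdx j u x t + (gam / 6 / mu) *\<^sub>R pdx j (lap u) x t)) (at 0)"
    unfolding A_u_def
    by (intro has_vector_derivative_add assms(1)
          bounded_linear.has_vector_derivative[OF bounded_linear_scaleR_right assms(2)])
  then show ?thesis unfolding pdx_def by (rule vector_derivative_at)
qed

lemma Mv:
  fixes u :: "real^'n \<Rightarrow> real \<Rightarrow> real^'n"
  assumes "\<And>j. pdx j (A_u mu gam u) x t = pdx j u x t + (gam / 6 / mu) *\<^sub>R pdx j (lap u) x t"
  shows "M_u mu gam u x t *v v = (\<Sum>j\<in>UNIV. (v$j) *\<^sub>R pdx j (A_u mu gam u) x t)"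
  unfolding assms
  by (simp add: M_u_def vec_eq_iff matrix_vector_mult_def jac_def sum_component algebra_simps)



theorem lemma4p2:
  fixes D :: "(real^'n) set"
    and u :: "real^'n \<Rightarrow> real \<Rightarrow> real^'n"
    and g y0 w0 :: "real^'n"
    and y w :: "real \<Rightarrow> real^'n"
    and t0 Rr mu kappa gam :: real
  assumes D_open: "open D"
    and t0: "t0 \<ge> 0"
    and pos: "Rr > 0" "mu > 0" "kappa > 0" "gam > 0"
    and u_smooth: "\<forall>x\<in>D. \<forall>t\<ge>t0. \<forall>j.
        ((\<lambda>h. u (x + h *\<^sub>R axis j 1) t) has_vector_derivative pdx j u x t) (at 0) \<and>
        ((\<lambda>h. pdx j u (x + h *\<^sub>R axis j 1) t) has_vector_derivative pdx j (pdx j u) x t) (at 0) \<and>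
        ((\<lambda>h. lap u (x + h *\<^sub>R axis j 1) t) has_vector_derivative pdx j (lap u) x t) (at 0) \<and>
        ((\<lambda>s. u x s) has_vector_derivative pdt {0..} u x t) (at t within {0..}) \<and>
        ((\<lambda>s. lap u x s) has_vector_derivative pdt {0..} (lap u) x t) (at t within {0..})"
    and star: "\<exists>Lb. C1_bounded D t0 (A_u mu gam u) Lb \<and> C1_bounded D t0 (B_u Rr mu gam g u) Lb"
    and y_cont: "continuous_on {t0..} y"
    and w_cont: "continuous_on {t0..} w"
    and y_in: "\<forall>t\<ge>t0. y t \<in> D"
    and y_eq: "\<forall>t\<ge>t0. ((\<lambda>s. w s + A_u mu gam u (y s) s) has_integral (y t - y0)) {t0..t}"
    and w_eq: "\<forall>t\<ge>t0. ((\<lambda>s. - mu *\<^sub>R w s - M_u mu gam u (y s) s *v w s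
                               - (kappa * sqrt mu / sqrt (t - s)) *\<^sub>R w s
                               + B_u Rr mu gam g u (y s) s) has_integral (w t - w0)) {t0..t}"
  shows "\<forall>\<epsilon>>0. holder_on (1/2) {t0..<t0+\<epsilon>} w \<and> locally_lipschitz_on {t0+\<epsilon>..} w"
proof -
  obtain Lb where LA: "C1_bounded D t0 (A_u mu gam u) Lb" and LB: "C1_bounded D t0 (B_u Rr mu gam g u) Lb"
    using star by blast
  define A where "A = A_u mu gam u"
  define Bf where "Bf = B_u Rr mu gam g u"
  have yD: "\<And>t. t \<ge> t0 \<Longrightarrow> y t \<in> D" using y_in by auto
  have Mv': "M_u mu gam u (y s) s *v v = (\<Sum>j\<in>UNIV. (v$j) *\<^sub>R pdx j A (y s) s)" if "s \<ge> t0" for s v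
    unfolding A_def
    by (rule Mv, rule pdx_A) (use u_smooth yD[OF that] that in auto)
  have Pc: "continuous_on {t0..} (\<lambda>s. pdx j A (y s) s)" for j
  proof -
    have "continuous_on (D \<times> {t0..}) (\<lambda>(x, t). pdx j A x t)"
      using LA unfolding C1_bounded_def A_def by blast
    moreover have "continuous_on {t0..} (\<lambda>s. (y s, s))"
      by (intro continuous_intros y_cont)
    ultimately have "continuous_on {t0..} (\<lambda>s. (\<lambda>(x, t). pdx j A x t) (y s, s))"
      by (rule continuous_on_compose2) (auto intro: yD)
    then show ?thesis by simp
  qed
  have Bc: "continuous_on {t0..} (\<lambda>s. Bf (y s) s)"
    unfolding Bf_def by (rule C1_comp_cont[OF D_open LB y_cont yD])
  define F where "F = (\<lambda>s. - mu *\<^sub>R w s - (\<Sum>j\<in>UNIV. (w s $ j) *\<^sub>R pdx j A (y s) s) + Bf (y s) s)"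
  have Fc: "continuous_on {t0..} F"
    unfolding F_def by (intro continuous_intros w_cont Pc Bc)
  define k where "k = kappa * sqrt mu"
  have k: "k > 0" using pos by (simp add: k_def)
  have keq: "((\<lambda>s. (k / sqrt (t - s)) *\<^sub>R w s) has_integral (w0 + integral {t0..t} F - w t)) {t0..t}"
    if t: "t \<ge> t0" for t
  proof -
    have J1: "((\<lambda>s. F s - (k / sqrt (t - s)) *\<^sub>R w s) has_integral (w t - w0)) {t0..t}"
    proof -
      have I: "((\<lambda>s. - mu *\<^sub>R w s - M_u mu gam u (y s) s *v w s
                               - (kappa * sqrt mu / sqrt (t - s)) *\<^sub>R w s
                               + B_u Rr mu gam g u (y s) s) has_integral (w t - w0)) {t0..t}"
        using w_eq t by blast
      have E: "- mu *\<^sub>R w s - M_u mu gam u (y s) s *v w s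
                               - (kappa * sqrt mu / sqrt (t - s)) *\<^sub>R w s
                               + B_u Rr mu gam g u (y s) s = F s - (k / sqrt (t - s)) *\<^sub>R w s"
        if "s \<in> {t0..t}" for s
        using Mv'[of s "w s"] that by (simp add: F_def k_def Bf_def algebra_simps)
      show ?thesis by (rule has_integral_eq[OF _ I]) (rule E)
    qed
    have J2: "(F has_integral integral {t0..t} F) {t0..t}"
      by (intro integrable_integral integrable_continuous_real continuous_on_subset[OF Fc]) auto
    have "((\<lambda>s. F s - (F s - (k / sqrt (t - s)) *\<^sub>R w s)) has_integral
                       (integral {t0..t} F - (w t - w0))) {t0..t}"
      by (rule has_integral_diff[OF J2 J1])
    then show ?thesis by (simp add: algebra_simps)
  qed
  obtain h0 where h0: "h0 > 0" and core: "\<And>T. \<exists>C\<ge>0. \<forall>t h. t0 \<le> t \<longrightarrow> 0 < h \<longrightarrow> h \<le> h0 \<longrightarrow> t + h \<le> T \<longrightarrow>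
            norm (w (t + h) - w t) \<le> C * h / sqrt (t - t0 + h)"
    using core[OF k w_cont Fc keq] by blast
  show ?thesis
  proof (intro allI impI conjI)
    fix \<epsilon> :: real assume \<epsilon>: "\<epsilon> > 0"
    show "holder_on (1/2) {t0..<t0+\<epsilon>} w"
    proof -
      obtain C where C: "C \<ge> 0" and Cb: "\<And>t h. t0 \<le> t \<Longrightarrow> 0 < h \<Longrightarrow> h \<le> h0 \<Longrightarrow> t + h \<le> t0 + \<epsilon> \<Longrightarrow>
            norm (w (t + h) - w t) \<le> C * h / sqrt (t - t0 + h)"
        using core[of "t0 + \<epsilon>"] by blast
      obtain W where W: "W \<ge> 0" "\<And>s. s \<in> {t0..t0+\<epsilon>} \<Longrightarrow> norm (w s) \<le> W"
        using cont_bound[OF w_cont] by blast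
      define Ch where "Ch = max C (2 * W / sqrt h0)"
      have lt: "norm (w t - w s) \<le> Ch * sqrt (t - s)"
        if st: "s \<in> {t0..<t0+\<epsilon>}" "t \<in> {t0..<t0+\<epsilon>}" "s < t" for s t
      proof (cases "t - s \<le> h0")
        case True
        have "norm (w (s + (t - s)) - w s) \<le> C * (t - s) / sqrt (s - t0 + (t - s))"
          by (rule Cb) (use st True in auto)
        also have "\<dots> = C * ((t - s) / sqrt (s - t0 + (t - s)))" by simp
        also have "\<dots> \<le> C * ((t - s) / sqrt (t - s))"
          using st C by (intro mult_left_mono divide_left_mono) auto
        also have "(t - s) / sqrt (t - s) = sqrt (t - s)" using st by (simp add: real_div_sqrt)
        also have "C * sqrt (t - s) \<le> Ch * sqrt (t - s)" using st by (intro mult_right_mono) (auto simp: Ch_def)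
        finally show ?thesis by simp
      next
        case False
        have "norm (w t - w s) \<le> norm (w t) + norm (w s)" by (rule norm_triangle_ineq4)
        also have "\<dots> \<le> W + W" using W st by (intro add_mono) auto
        also have "\<dots> = (2 * W / sqrt h0) * sqrt h0" using h0 by simp
        also have "\<dots> \<le> (2 * W / sqrt h0) * sqrt (t - s)"
          using False W h0 by (intro mult_left_mono) auto
        also have "\<dots> \<le> Ch * sqrt (t - s)" using st by (intro mult_right_mono) (auto simp: Ch_def)
        finally show ?thesis .
      qed
      show ?thesis unfolding holder_on_def
      proof (intro exI[of _ Ch] ballI)
        fix s t assume s: "s \<in> {t0..<t0+\<epsilon>}" and t: "t \<in> {t0..<t0+\<epsilon>}"
        have hs: "\<bar>t - s\<bar> powr (1/2) = sqrt \<bar>t - s\<bar>" by (simp add: powr_half_sqrt)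
        consider "s < t" | "s = t" | "t < s" by linarith
        then show "norm (w t - w s) \<le> Ch * \<bar>t - s\<bar> powr (1/2)"
        proof cases
          case 1 then show ?thesis using lt[OF s t] hs by simp
        next
          case 2 then show ?thesis by simp
        next
          case 3 then show ?thesis using lt[OF t s] hs by (simp add: norm_minus_commute abs_minus_commute)
        qed
      qed
    qed
    show "locally_lipschitz_on {t0+\<epsilon>..} w" unfolding locally_lipschitz_on_def
    proof
      fix x assume x: "x \<in> {t0+\<epsilon>..}"
      obtain C where C: "C \<ge> 0" and Cb: "\<And>t h. t0 \<le> t \<Longrightarrow> 0 < h \<Longrightarrow> h \<le> h0 \<Longrightarrow> t + h \<le> x + h0 \<Longrightarrow>
            norm (w (t + h) - w t) \<le> C * h / sqrt (t - t0 + h)"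
        using core[of "x + h0"] by blast
      define U where "U = ball x (h0 / 2)"
      have lt: "norm (w t - w s) \<le> C / sqrt \<epsilon> * (t - s)"
        if st: "s \<in> U \<inter> {t0+\<epsilon>..}" "t \<in> U \<inter> {t0+\<epsilon>..}" "s < t" for s t
      proof -
        have d: "x - h0 / 2 < s" "s < x + h0 / 2" "x - h0 / 2 < t" "t < x + h0 / 2"
        proof -
          have "dist x s < h0 / 2" "dist x t < h0 / 2" using st by (auto simp: U_def)
          then show "x - h0 / 2 < s" "s < x + h0 / 2" "x - h0 / 2 < t" "t < x + h0 / 2"
            unfolding dist_real_def by arith+
        qed
        have "norm (w (s + (t - s)) - w s) \<le> C * (t - s) / sqrt (s - t0 + (t - s))"
          by (rule Cb) (use st d \<epsilon> in auto)
        also have "\<dots> \<le> C * (t - s) / sqrt \<epsilon>"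
          using st C \<epsilon> by (intro divide_left_mono mult_nonneg_nonneg) auto
        finally show ?thesis by simp
      qed
      show "\<exists>U C. open U \<and> x \<in> U \<and> C-lipschitz_on (U \<inter> {t0+\<epsilon>..}) w"
      proof (intro exI[of _ U] exI[of _ "C / sqrt \<epsilon>"] conjI)
        show "open U" by (simp add: U_def)
        show "x \<in> U" using h0 by (simp add: U_def)
        show "(C / sqrt \<epsilon>)-lipschitz_on (U \<inter> {t0+\<epsilon>..}) w"
        proof (rule lipschitz_onI)
          fix a b assume a: "a \<in> U \<inter> {t0+\<epsilon>..}" and b: "b \<in> U \<inter> {t0+\<epsilon>..}"
          consider "a < b" | "a = b" | "b < a" by linarith
          then show "dist (w a) (w b) \<le> C / sqrt \<epsilon> * dist a b"
          proof cases
            case 1 then show ?thesis using lt[OF a b] by (simp add: dist_norm norm_minus_commute)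
          next
            case 2 then show ?thesis by simp
          next
            case 3 then show ?thesis using lt[OF b a] by (simp add: dist_norm)
          qed
        qed (use C \<epsilon> in simp)
      qed
    qed
  qed
qed


end
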